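(* Let $\mathcal{Y}$ be a finite alphabet, $n\in\mathbb{N}$, and let $P_0,P_1\in\mathcal{P}(\mathcal{Y}^{\otimes n})$ be classical probability distributions, viewed as diagonal density matrices in the basis indexed by $\mathcal{Y}^{\times n}$. Then for every pair of density matrices $\rho,\sigma\in\mathrm{D}(\mathcal{Y}^{\otimes n})$ whose diagonals (in that basis) coincide with those of $P_0$ and $P_1$ respectively, and every $\varepsilon\in(0,1]$, one has $\xi^{\varepsilon}_{H}(\rho\|\sigma)\le\xi^{\varepsilon}_{H}(P_0\|P_1)$. Moreover, there exist classical $P_0,P_1$, a density matrix $\sigma$ with the same diagonal as $P_1$, and $\varepsilon\in(0,1)$ such that $\xi^{\varepsilon}_{H}(P_0\|\sigma)<\xi^{\varepsilon}_{H}(P_0\|P_1)$.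
   Context: $\mathcal{Y}^{\otimes n}$ denotes the complex Euclidean space with orthonormal basis indexed by sequences in $\mathcal{Y}^{\times n}$; $\mathrm{D}(\cdot)$ denotes density matrices (positive semidefinite, trace one) and $\mathcal{P}(\cdot)\subset\mathrm{D}(\cdot)$ those diagonal in the given basis (classical distributions). For $\rho\in\mathrm{D}(\mathcal{Y}^{\otimes n})$, $\sigma\succeq 0$ and $\varepsilon\in[0,1]$, the optimal type II error is $\xi^{\varepsilon}_{H}(\rho\|\sigma):=\min\{\mathrm{Tr}(\sigma A):\ 0\preceq A\preceq\mathbb{I},\ \mathrm{Tr}(\rho A)\ge 1-\varepsilon\}$. *)

theory Defs
  imports Complex_Main
begin

text \<open>Matrices on the space with orthonormal basis indexed by the finite set I are
  represented as functions I x I -> complex (entries outside I are ignored).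
  For the space Y^{tensor n} the index set is Y^{x n}: words of length n over Y.\<close>

definition seqs :: "'a set \<Rightarrow> nat \<Rightarrow> 'a list set" where
  "seqs Y n = {xs. length xs = n \<and> set xs \<subseteq> Y}"

type_synonym 'i cmat = "'i \<Rightarrow> 'i \<Rightarrow> complex"

definition mmul :: "'i set \<Rightarrow> 'i cmat \<Rightarrow> 'i cmat \<Rightarrow> 'i cmat" where
  "mmul I A B = (\<lambda>i j. \<Sum>k\<in>I. A i k * B k j)"

definition mtrace :: "'i set \<Rightarrow> 'i cmat \<Rightarrow> complex" where
  "mtrace I A = (\<Sum>i\<in>I. A i i)"

definition idm :: "'i cmat" where
  "idm = (\<lambda>i j. if i = j then 1 else 0)"

text \<open>Positive semidefinite: <v, A v> is a nonnegative real for all vectors v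
  (for complex matrices this includes Hermiticity).\<close>
definition psd :: "'i set \<Rightarrow> 'i cmat \<Rightarrow> bool" where
  "psd I A \<longleftrightarrow> (\<forall>v :: 'i \<Rightarrow> complex.
     let q = (\<Sum>i\<in>I. \<Sum>j\<in>I. cnj (v i) * A i j * v j) in Im q = 0 \<and> Re q \<ge> 0)"

definition loewner_le :: "'i set \<Rightarrow> 'i cmat \<Rightarrow> 'i cmat \<Rightarrow> bool" where
  "loewner_le I A B \<longleftrightarrow> psd I (\<lambda>i j. B i j - A i j)"

definition density :: "'i set \<Rightarrow> 'i cmat \<Rightarrow> bool" where
  "density I \<rho> \<longleftrightarrow> psd I \<rho> \<and> mtrace I \<rho> = 1"

definition classical :: "'i set \<Rightarrow> 'i cmat \<Rightarrow> bool" where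
  "classical I P \<longleftrightarrow> density I P \<and> (\<forall>i\<in>I. \<forall>j\<in>I. i \<noteq> j \<longrightarrow> P i j = 0)"

text \<open>Optimal type II error xi_H^eps(rho||sigma): the minimum of Tr(sigma A) over tests
  0 <= A <= 1 with Tr(rho A) >= 1 - eps (traces of products of PSD matrices are real;
  the minimum is attained, so it equals the infimum).\<close>
definition xiH :: "'i set \<Rightarrow> real \<Rightarrow> 'i cmat \<Rightarrow> 'i cmat \<Rightarrow> real" where
  "xiH I \<epsilon> \<rho> \<sigma> = Inf {Re (mtrace I (mmul I \<sigma> A)) | A.
      loewner_le I (\<lambda>_ _. 0) A \<and> loewner_le I A idm \<and>
      Re (mtrace I (mmul I \<rho> A)) \<ge> 1 - \<epsilon>}"

end

theory Submission
  imports Defs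
begin


definition qf :: "'i set \<Rightarrow> 'i cmat \<Rightarrow> ('i \<Rightarrow> complex) \<Rightarrow> complex" where
  "qf I M v = (\<Sum>i\<in>I. \<Sum>j\<in>I. cnj (v i) * M i j * v j)"

lemma psd_qf: "psd I M \<longleftrightarrow> (\<forall>v. Im (qf I M v) = 0 \<and> Re (qf I M v) \<ge> 0)"
  unfolding psd_def qf_def Let_def by simp

lemma sum_single:
  assumes "finite I" "i \<in> I" "\<And>j. j \<in> I \<Longrightarrow> j \<noteq> i \<Longrightarrow> f j = 0"
  shows "(\<Sum>j\<in>I. f j) = f i"
proof -
  have "(\<Sum>j\<in>I. f j) = f i + (\<Sum>j\<in>I - {i}. f j)"
    using assms by (simp add: sum.remove)
  also have "(\<Sum>j\<in>I - {i}. f j) = 0" using assms by (intro sum.neutral) auto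
  finally show ?thesis by simp
qed

lemma qf_single:
  assumes "finite I" "i \<in> I"
  shows "qf I M (\<lambda>k. if k = i then 1 else 0) = M i i"
proof -
  have "qf I M (\<lambda>k. if k = i then 1 else 0) = (\<Sum>a\<in>I. cnj (if a = i then 1 else 0) * M a i)"
    unfolding qf_def using assms by (intro sum.cong refl, subst sum_single[of I i]) auto
  also have "\<dots> = M i i" using assms by (subst sum_single[of I i]) auto
  finally show ?thesis .
qed

lemma sum_pair:
  assumes "finite I" "i \<in> I" "j \<in> I" "i \<noteq> j" "\<And>k. k \<in> I \<Longrightarrow> k \<noteq> i \<Longrightarrow> k \<noteq> j \<Longrightarrow> f k = 0"
  shows "(\<Sum>k\<in>I. f k) = f i + f j"
proof -
  have "(\<Sum>k\<in>I. f k) = (\<Sum>k\<in>{i,j}. f k)"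
    using assms by (intro sum.mono_neutral_right) auto
  then show ?thesis using assms by simp
qed

lemma qf_pair:
  assumes "finite I" "i \<in> I" "j \<in> I" "i \<noteq> j"
  shows "qf I M (\<lambda>k. if k = i then p else if k = j then q else 0) =
    cnj p * M i i * p + cnj p * M i j * q + cnj q * M j i * p + cnj q * M j j * q"
proof -
  let ?v = "\<lambda>k. if k = i then p else if k = j then q else 0"
  have inner: "(\<Sum>b\<in>I. cnj (?v a) * M a b * ?v b) = cnj (?v a) * M a i * p + cnj (?v a) * M a j * q" for a
    using assms by (subst sum_pair[of I i j]) auto
  show ?thesis unfolding qf_def inner
    using assms by (subst sum_pair[of I i j]) (auto simp: algebra_simps)
qed

lemma psd_diag:
  assumes "finite I" "\<And>i j. i \<in> I \<Longrightarrow> j \<in> I \<Longrightarrow> i \<noteq> j \<Longrightarrow> M i j = 0"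
    "\<And>i. i \<in> I \<Longrightarrow> Im (M i i) = 0 \<and> Re (M i i) \<ge> 0"
  shows "psd I M"
  unfolding psd_qf
proof
  fix v
  have "qf I M v = (\<Sum>i\<in>I. cnj (v i) * M i i * v i)"
    unfolding qf_def using assms by (intro sum.cong refl sum_single) auto
  also have "\<dots> = (\<Sum>i\<in>I. M i i * of_real ((cmod (v i))\<^sup>2))"
    by (intro sum.cong refl) (subst complex_norm_square, simp add: mult_ac)
  finally have q: "qf I M v = \<dots>" .
  have "Im (qf I M v) = (\<Sum>i\<in>I. Im (M i i) * (cmod (v i))\<^sup>2)"
    unfolding q Im_sum by simp
  also have "\<dots> = 0" using assms(3) by simp
  finally have 1: "Im (qf I M v) = 0" .
  have "Re (qf I M v) = (\<Sum>i\<in>I. Re (M i i) * (cmod (v i))\<^sup>2)"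
    unfolding q Re_sum by simp
  also have "\<dots> \<ge> 0" using assms(3) by (intro sum_nonneg) simp
  finally show "Im (qf I M v) = 0 \<and> 0 \<le> Re (qf I M v)" using 1 by simp
qed

definition istest :: "'i set \<Rightarrow> 'i cmat \<Rightarrow> bool" where
  "istest I A \<longleftrightarrow> loewner_le I (\<lambda>_ _. 0) A \<and> loewner_le I A idm"

lemma test_diag:
  assumes "finite I" "istest I A" "i \<in> I"
  shows "Im (A i i) = 0 \<and> 0 \<le> Re (A i i) \<and> Re (A i i) \<le> 1"
proof -
  from assms(2) have p1: "psd I A" and p2: "psd I (\<lambda>i j. idm i j - A i j)"
    unfolding istest_def loewner_le_def by auto
  from p1 have "Im (qf I A (\<lambda>k. if k = i then 1 else 0)) = 0 \<and> Re (qf I A (\<lambda>k. if k = i then 1 else 0)) \<ge> 0"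
    unfolding psd_qf by blast
  moreover from p2 have "Re (qf I (\<lambda>i j. idm i j - A i j) (\<lambda>k. if k = i then 1 else 0)) \<ge> 0"
    unfolding psd_qf by blast
  ultimately show ?thesis using assms by (simp add: qf_single idm_def)
qed

lemma test_offdiag:
  assumes "finite I" "istest I A" "i \<in> I" "j \<in> I"
  shows "cmod (A i j) \<le> 2"
proof (cases "i = j")
  case True
  then show ?thesis using test_diag[OF assms(1-3)]
    by (simp add: cmod_eq_Re)
next
  case False
  from assms(2) have p1: "psd I A" and p2: "psd I (\<lambda>i j. idm i j - A i j)"
    unfolding istest_def loewner_le_def by auto
  have d1: "Im (A i i) = 0 \<and> 0 \<le> Re (A i i) \<and> Re (A i i) \<le> 1" using test_diag[OF assms(1,2,3)] .
  have d2: "Im (A j j) = 0 \<and> 0 \<le> Re (A j j) \<and> Re (A j j) \<le> 1" using test_diag[OF assms(1,2,4)] .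
  have Q: "\<And>M p q. psd I M \<Longrightarrow> Im (cnj p * M i i * p + cnj p * M i j * q + cnj q * M j i * p + cnj q * M j j * q) = 0
     \<and> Re (cnj p * M i i * p + cnj p * M i j * q + cnj q * M j i * p + cnj q * M j j * q) \<ge> 0"
  proof -
    fix M p q assume "psd I M"
    then have "Im (qf I M (\<lambda>k. if k = i then p else if k = j then q else 0)) = 0 \<and>
       Re (qf I M (\<lambda>k. if k = i then p else if k = j then q else 0)) \<ge> 0"
      unfolding psd_qf by blast
    then show "?thesis M p q" by (simp only: qf_pair[OF assms(1,3,4) False])
  qed
  note a1 = Q[OF p1, of 1 1] and a2 = Q[OF p1, of 1 "-1"] and a3 = Q[OF p1, of 1 "\<i>"]
    and a4 = Q[OF p1, of 1 "-\<i>"]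
  have F1: "Im (A i i) + Im (A i j) + Im (A j i) + Im (A j j) = 0" using a1 by simp
  have F2: "Im (A i i) + Re (A i j) - Re (A j i) + Im (A j j) = 0" using a3 by simp
  have F3: "Re (A i i) + Re (A i j) + Re (A j i) + Re (A j j) \<ge> 0" using a1 by simp
  have F4: "Re (A i i) - Re (A i j) - Re (A j i) + Re (A j j) \<ge> 0" using a2 by simp
  have F5: "Re (A i i) - Im (A i j) + Im (A j i) + Re (A j j) \<ge> 0" using a3 by simp
  have F6: "Re (A i i) + Im (A i j) - Im (A j i) + Re (A j j) \<ge> 0" using a4 by simp
  have "\<bar>Re (A i j)\<bar> \<le> 1" "\<bar>Im (A i j)\<bar> \<le> 1"
    using F1 F2 F3 F4 F5 F6 d1 d2 by linarith+
  then show ?thesis using cmod_le[of "A i j"] by linarith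
qed

lemma mtrace_diag_left:
  assumes "finite I" "\<And>i j. i \<in> I \<Longrightarrow> j \<in> I \<Longrightarrow> i \<noteq> j \<Longrightarrow> P i j = 0"
  shows "mtrace I (mmul I P A) = (\<Sum>i\<in>I. P i i * A i i)"
  unfolding mtrace_def mmul_def using assms by (intro sum.cong refl sum_single) auto

lemma mtrace_diag_right:
  assumes "finite I" "\<And>i j. i \<in> I \<Longrightarrow> j \<in> I \<Longrightarrow> i \<noteq> j \<Longrightarrow> N i j = 0"
  shows "mtrace I (mmul I M N) = (\<Sum>i\<in>I. M i i * N i i)"
  unfolding mtrace_def mmul_def using assms by (intro sum.cong refl sum_single) auto

lemma mtrace_idm: "finite I \<Longrightarrow> mtrace I (mmul I M idm) = mtrace I M"
  by (subst mtrace_diag_right) (auto simp: idm_def mtrace_def)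

lemma idm_test: "finite I \<Longrightarrow> istest I idm"
  unfolding istest_def loewner_le_def
  by (auto intro!: psd_diag simp: idm_def)

lemma diag_test:
  assumes "finite I" "istest I A"
  shows "istest I (\<lambda>i j. if i = j then A i i else 0)"
  unfolding istest_def loewner_le_def
  using test_diag[OF assms] assms(1)
  by (auto intro!: psd_diag simp: idm_def)

lemma bdd_values:
  assumes "finite I"
  shows "bdd_below {Re (mtrace I (mmul I \<sigma> A)) | A. loewner_le I (\<lambda>_ _. 0) A \<and> loewner_le I A idm \<and>
      Re (mtrace I (mmul I \<rho> A)) \<ge> 1 - \<epsilon>}"
proof (rule bdd_belowI)
  fix x assume "x \<in> {Re (mtrace I (mmul I \<sigma> A)) | A. loewner_le I (\<lambda>_ _. 0) A \<and> loewner_le I A idm \<and>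
      Re (mtrace I (mmul I \<rho> A)) \<ge> 1 - \<epsilon>}"
  then obtain A where x: "x = Re (mtrace I (mmul I \<sigma> A))" and t: "istest I A"
    unfolding istest_def by blast
  have "(\<Sum>i\<in>I. \<Sum>k\<in>I. - (2 * cmod (\<sigma> i k))) \<le> (\<Sum>i\<in>I. \<Sum>k\<in>I. Re (\<sigma> i k * A k i))"
  proof (intro sum_mono)
    fix i k assume ik: "i \<in> I" "k \<in> I"
    have "cmod (\<sigma> i k * A k i) \<le> cmod (\<sigma> i k) * 2"
      unfolding norm_mult using test_offdiag[OF assms t ik(2,1)]
      by (intro mult_left_mono) auto
    then show "- (2 * cmod (\<sigma> i k)) \<le> Re (\<sigma> i k * A k i)"
      using abs_Re_le_cmod[of "\<sigma> i k * A k i"] by linarith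
  qed
  also have "\<dots> = x" unfolding x mtrace_def mmul_def Re_sum ..
  finally show "(\<Sum>i\<in>I. \<Sum>k\<in>I. - (2 * cmod (\<sigma> i k))) \<le> x" .
qed

lemma part1:
  assumes fin: "finite I" and c0: "classical I P0" and c1: "classical I P1"
    and d0: "density I \<rho>" and d1: "density I \<sigma>"
    and e0: "\<forall>x\<in>I. \<rho> x x = P0 x x" and e1: "\<forall>x\<in>I. \<sigma> x x = P1 x x" and eps: "0 \<le> \<epsilon>"
  shows "xiH I \<epsilon> \<rho> \<sigma> \<le> xiH I \<epsilon> P0 P1"
  unfolding xiH_def
proof (rule cInf_superset_mono)
  have off0: "\<And>i j. i \<in> I \<Longrightarrow> j \<in> I \<Longrightarrow> i \<noteq> j \<Longrightarrow> P0 i j = 0"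
    using c0 unfolding classical_def by blast
  have off1: "\<And>i j. i \<in> I \<Longrightarrow> j \<in> I \<Longrightarrow> i \<noteq> j \<Longrightarrow> P1 i j = 0"
    using c1 unfolding classical_def by blast
  have tr0: "mtrace I P0 = 1" using c0 unfolding classical_def density_def by blast
  have "Re (mtrace I (mmul I P1 idm)) \<in> {Re (mtrace I (mmul I P1 A)) | A. loewner_le I (\<lambda>_ _. 0) A \<and> loewner_le I A idm \<and>
      Re (mtrace I (mmul I P0 A)) \<ge> 1 - \<epsilon>}"
    using idm_test[OF fin] unfolding istest_def
    by (auto simp: mtrace_idm[OF fin] tr0 eps intro!: exI[of _ idm])
  then show "{Re (mtrace I (mmul I P1 A)) | A. loewner_le I (\<lambda>_ _. 0) A \<and> loewner_le I A idm \<and>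
      Re (mtrace I (mmul I P0 A)) \<ge> 1 - \<epsilon>} \<noteq> {}" by blast
  show "bdd_below {Re (mtrace I (mmul I \<sigma> A)) | A. loewner_le I (\<lambda>_ _. 0) A \<and> loewner_le I A idm \<and>
      Re (mtrace I (mmul I \<rho> A)) \<ge> 1 - \<epsilon>}" by (rule bdd_values[OF fin])
  show "{Re (mtrace I (mmul I P1 A)) | A. loewner_le I (\<lambda>_ _. 0) A \<and> loewner_le I A idm \<and>
      Re (mtrace I (mmul I P0 A)) \<ge> 1 - \<epsilon>} \<subseteq>
    {Re (mtrace I (mmul I \<sigma> A)) | A. loewner_le I (\<lambda>_ _. 0) A \<and> loewner_le I A idm \<and>
      Re (mtrace I (mmul I \<rho> A)) \<ge> 1 - \<epsilon>}"
  proof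
    fix x assume "x \<in> {Re (mtrace I (mmul I P1 A)) | A. loewner_le I (\<lambda>_ _. 0) A \<and> loewner_le I A idm \<and>
      Re (mtrace I (mmul I P0 A)) \<ge> 1 - \<epsilon>}"
    then obtain A where x: "x = Re (mtrace I (mmul I P1 A))" and t: "istest I A"
      and f: "Re (mtrace I (mmul I P0 A)) \<ge> 1 - \<epsilon>"
      unfolding istest_def by blast
    define D where "D = (\<lambda>i j. if i = j then A i i else (0::complex))"
    have tD: "istest I D" unfolding D_def by (rule diag_test[OF fin t])
    have offD: "\<And>i j. i \<in> I \<Longrightarrow> j \<in> I \<Longrightarrow> i \<noteq> j \<Longrightarrow> D i j = 0" unfolding D_def by simp
    have "mtrace I (mmul I \<rho> D) = (\<Sum>i\<in>I. \<rho> i i * D i i)" by (rule mtrace_diag_right[OF fin offD])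
    also have "\<dots> = (\<Sum>i\<in>I. P0 i i * A i i)" using e0 unfolding D_def by (intro sum.cong) auto
    also have "\<dots> = mtrace I (mmul I P0 A)" by (rule mtrace_diag_left[OF fin off0, symmetric])
    finally have r: "mtrace I (mmul I \<rho> D) = mtrace I (mmul I P0 A)" .
    have "mtrace I (mmul I \<sigma> D) = (\<Sum>i\<in>I. \<sigma> i i * D i i)" by (rule mtrace_diag_right[OF fin offD])
    also have "\<dots> = (\<Sum>i\<in>I. P1 i i * A i i)" using e1 unfolding D_def by (intro sum.cong) auto
    also have "\<dots> = mtrace I (mmul I P1 A)" by (rule mtrace_diag_left[OF fin off1, symmetric])
    finally have s: "mtrace I (mmul I \<sigma> D) = mtrace I (mmul I P1 A)" .
    show "x \<in> {Re (mtrace I (mmul I \<sigma> A)) | A. loewner_le I (\<lambda>_ _. 0) A \<and> loewner_le I A idm \<and>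
      Re (mtrace I (mmul I \<rho> A)) \<ge> 1 - \<epsilon>}"
      using tD f r s x unfolding istest_def by (auto intro!: exI[of _ D])
  qed
qed


lemma psd_cong:
  assumes "\<And>i j. i \<in> I \<Longrightarrow> j \<in> I \<Longrightarrow> M i j = N i j"
  shows "psd I M = psd I N"
proof -
  have "qf I M v = qf I N v" for v unfolding qf_def using assms by (intro sum.cong refl) auto
  then show ?thesis unfolding psd_qf by simp
qed

lemma psd_rank1:
  assumes "c \<ge> 0"
  shows "psd I (\<lambda>i j. of_real c * cnj (w i) * w j)"
  unfolding psd_qf
proof
  fix v
  define S where "S = (\<Sum>j\<in>I. w j * v j)"
  have "qf I (\<lambda>i j. of_real c * cnj (w i) * w j) v =
      (\<Sum>i\<in>I. \<Sum>j\<in>I. of_real c * (cnj (w i * v i) * (w j * v j)))"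
    unfolding qf_def by (intro sum.cong refl) (simp add: mult_ac)
  also have "\<dots> = of_real c * (\<Sum>i\<in>I. \<Sum>j\<in>I. cnj (w i * v i) * (w j * v j))"
    by (simp add: sum_distrib_left)
  also have "(\<Sum>i\<in>I. \<Sum>j\<in>I. cnj (w i * v i) * (w j * v j)) = cnj S * S"
    unfolding S_def cnj_sum sum_product ..
  finally have "qf I (\<lambda>i j. of_real c * cnj (w i) * w j) v = of_real c * (cnj S * S)" .
  also have "\<dots> = of_real (c * (cmod S)\<^sup>2)"
    by (subst of_real_mult, subst complex_norm_square) (simp add: mult_ac)
  finally show "Im (qf I (\<lambda>i j. of_real c * cnj (w i) * w j) v) = 0 \<and>
      0 \<le> Re (qf I (\<lambda>i j. of_real c * cnj (w i) * w j) v)"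
    using assms by simp
qed

lemma seqs_one: "seqs Y (Suc 0) = (\<lambda>y. [y]) ` Y"
  by (auto simp: seqs_def length_Suc_conv)

lemma part2:
  "\<exists>(Y :: nat set) (n :: nat) P0 P1 \<sigma> (\<epsilon> :: real).
            finite Y \<and>
            classical (seqs Y n) P0 \<and> classical (seqs Y n) P1 \<and>
            density (seqs Y n) \<sigma> \<and>
            (\<forall>x\<in>seqs Y n. \<sigma> x x = P1 x x) \<and>
            0 < \<epsilon> \<and> \<epsilon> < 1 \<and>
            xiH (seqs Y n) \<epsilon> P0 \<sigma> < xiH (seqs Y n) \<epsilon> P0 P1"
proof -
  define I where "I = seqs {0::nat, 1} 1"
  have I: "I = {[0], [1]}" unfolding I_def by (simp add: seqs_one)
  have fin: "finite I" unfolding I by simp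
  define P where "P = (\<lambda>(i::nat list) j. if i = j then (1/2::complex) else 0)"
  define S where "S = (\<lambda>(i::nat list) (j::nat list). (1/2::complex))"
  define w where "w = (\<lambda>i::nat list. if i = [0] then (1::complex) else -1)"
  define A where "A = (\<lambda>i j. of_real (1/2) * cnj (w i) * w j)"
  have cP: "classical I P"
    unfolding classical_def density_def
    by (auto intro!: psd_diag simp: fin P_def mtrace_def I)
  have psdS: "psd I S"
  proof -
    have "psd I (\<lambda>i j. of_real (1/2) * cnj ((\<lambda>_. 1) i) * (\<lambda>_. 1) j)" by (rule psd_rank1) simp
    moreover have "psd I (\<lambda>i j. of_real (1/2) * cnj ((\<lambda>_. 1) i) * (\<lambda>_. 1) j) = psd I S"
      by (rule psd_cong) (simp add: S_def)
    ultimately show ?thesis by simp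
  qed
  have dS: "density I S" unfolding density_def using psdS by (simp add: mtrace_def I S_def)
  have tA: "istest I A"
    unfolding istest_def loewner_le_def
  proof
    have "psd I A" unfolding A_def by (rule psd_rank1) simp
    then show "psd I (\<lambda>i j. A i j - 0)" by simp
    have "psd I (\<lambda>i j. idm i j - A i j) = psd I S"
      by (rule psd_cong) (auto simp: I S_def A_def w_def idm_def)
    then show "psd I (\<lambda>i j. idm i j - A i j)" using psdS by simp
  qed
  have trSA: "mtrace I (mmul I S A) = 0"
    by (simp add: mtrace_def mmul_def I S_def A_def w_def)
  have trPA: "mtrace I (mmul I P A) = 1/2"
    by (simp add: mtrace_def mmul_def I P_def A_def w_def)
  have up: "xiH I (1/2) P S \<le> 0"
    unfolding xiH_def
  proof (rule cInf_lower2)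
    show "Re (mtrace I (mmul I S A)) \<in> {Re (mtrace I (mmul I S A)) | A. loewner_le I (\<lambda>_ _. 0) A \<and> loewner_le I A idm \<and>
      Re (mtrace I (mmul I P A)) \<ge> 1 - 1/2}"
      using tA unfolding istest_def trPA by (auto intro!: exI[of _ A] simp: trPA)
    show "Re (mtrace I (mmul I S A)) \<le> 0" using trSA by simp
    show "bdd_below {Re (mtrace I (mmul I S A)) | A. loewner_le I (\<lambda>_ _. 0) A \<and> loewner_le I A idm \<and>
      Re (mtrace I (mmul I P A)) \<ge> 1 - 1/2}" by (rule bdd_values[OF fin])
  qed
  have lo: "1/2 \<le> xiH I (1/2) P P"
    unfolding xiH_def
  proof (rule cInf_greatest)
    have "mtrace I P = 1" using cP unfolding classical_def density_def by blast
    then have "Re (mtrace I (mmul I P idm)) \<in> {Re (mtrace I (mmul I P A)) | A. loewner_le I (\<lambda>_ _. 0) A \<and> loewner_le I A idm \<and>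
      Re (mtrace I (mmul I P A)) \<ge> 1 - 1/2}"
      using idm_test[OF fin] unfolding istest_def
      by (auto simp: mtrace_idm[OF fin] intro!: exI[of _ idm])
    then show "{Re (mtrace I (mmul I P A)) | A. loewner_le I (\<lambda>_ _. 0) A \<and> loewner_le I A idm \<and>
      Re (mtrace I (mmul I P A)) \<ge> 1 - 1/2} \<noteq> {}" by blast
    show "\<And>x. x \<in> {Re (mtrace I (mmul I P A)) | A. loewner_le I (\<lambda>_ _. 0) A \<and> loewner_le I A idm \<and>
      Re (mtrace I (mmul I P A)) \<ge> 1 - 1/2} \<Longrightarrow> 1/2 \<le> x" by auto
  qed
  have "finite {0::nat, 1} \<and> classical (seqs {0::nat, 1} 1) P \<and> classical (seqs {0::nat, 1} 1) P \<and>
            density (seqs {0::nat, 1} 1) S \<and>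
            (\<forall>x\<in>seqs {0::nat, 1} 1. S x x = P x x) \<and>
            0 < (1/2::real) \<and> (1/2::real) < 1 \<and>
            xiH (seqs {0::nat, 1} 1) (1/2) P S < xiH (seqs {0::nat, 1} 1) (1/2) P P"
    using cP dS up lo unfolding I_def[symmetric] by (auto simp: I S_def P_def)
  then show ?thesis by blast
qed


lemma finite_seqs: "finite Y \<Longrightarrow> finite (seqs Y n)"
  unfolding seqs_def using finite_lists_length_eq[of Y n] by (simp add: conj_commute)

theorem proposition1:
  shows "(\<forall>(Y :: 'a set) (n :: nat) P0 P1 \<rho> \<sigma> (\<epsilon> :: real).
            finite Y \<and>
            classical (seqs Y n) P0 \<and> classical (seqs Y n) P1 \<and>
            density (seqs Y n) \<rho> \<and> density (seqs Y n) \<sigma> \<and>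
            (\<forall>x\<in>seqs Y n. \<rho> x x = P0 x x) \<and>
            (\<forall>x\<in>seqs Y n. \<sigma> x x = P1 x x) \<and>
            0 < \<epsilon> \<and> \<epsilon> \<le> 1
          \<longrightarrow> xiH (seqs Y n) \<epsilon> \<rho> \<sigma> \<le> xiH (seqs Y n) \<epsilon> P0 P1)
       \<and>
       (\<exists>(Y :: nat set) (n :: nat) P0 P1 \<sigma> (\<epsilon> :: real).
            finite Y \<and>
            classical (seqs Y n) P0 \<and> classical (seqs Y n) P1 \<and>
            density (seqs Y n) \<sigma> \<and>
            (\<forall>x\<in>seqs Y n. \<sigma> x x = P1 x x) \<and>
            0 < \<epsilon> \<and> \<epsilon> < 1 \<and>
            xiH (seqs Y n) \<epsilon> P0 \<sigma> < xiH (seqs Y n) \<epsilon> P0 P1)"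
  proof (rule conjI)
  show "\<exists>(Y :: nat set) (n :: nat) P0 P1 \<sigma> (\<epsilon> :: real).
            finite Y \<and>
            classical (seqs Y n) P0 \<and> classical (seqs Y n) P1 \<and>
            density (seqs Y n) \<sigma> \<and>
            (\<forall>x\<in>seqs Y n. \<sigma> x x = P1 x x) \<and>
            0 < \<epsilon> \<and> \<epsilon> < 1 \<and>
            xiH (seqs Y n) \<epsilon> P0 \<sigma> < xiH (seqs Y n) \<epsilon> P0 P1" by (rule part2)
qed (auto intro!: part1 finite_seqs)

end
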